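(* Let $T>0$, $U_T=U\times(0,T]$, $\overline{U_T}=\bar U\times[0,T]$ and $\partial_pU_T=\overline{U_T}\setminus U_T$. Assume $u\in C(\overline{U_T})\cap C^{2,1}_{x,t}(U_T)$, $u\ge0$ on $\overline{U_T}$, and $u$ satisfies $u_t=\nabla\cdot\big(X(u,\nabla u+u^2\mathcal Z(x,t))\big)$ in $U_T$. Then $\max_{\overline{U_T}}u=\max_{\partial_pU_T}u$.
   Context: Let $N\ge1$ be an integer, $0=\bar\alpha_0<\bar\alpha_1<\dots<\bar\alpha_N$, $a_0,\dots,a_N>0$, $g(s)=\sum_{i=0}^Na_is^{\bar\alpha_i}$ for $s\ge0$ ($0^0=1$). Fix a unit vector $\vec k\in\mathbb R^3$ and let $\mathbf J$ be the matrix with $\mathbf Jx=\vec k\times x$. For $z\in\mathbb R$, $F_z(v)=g(|v|)v+z\mathbf Jv$ is a bijection of $\mathbb R^3$; fix $R_*\ge0$ and let $X(z,y)=F_{R_*z}^{-1}(y)$ for $z\in\mathbb R$, $y\in\mathbb R^3$. Let $\mathcal G>0$, $\Omega\ge0$, $e_0\in C^\infty(\mathbb R,\mathbb R^3)$ with $|e_0(t)|=1$, and $\mathcal Z(x,t)=-\mathcal Ge_0(t)+\Omega^2\mathbf J^2x$. $U\subset\mathbb R^3$ is open, bounded, with $C^1$ boundary. *)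

theory Defs
  imports "HOL-Analysis.Analysis"
begin

text \<open>Power with the convention 0 powr 0 = 1 (the paper's 0^0 = 1).\<close>
definition pw :: "real \<Rightarrow> real \<Rightarrow> real" where
  "pw s \<alpha> = (if \<alpha> = 0 then 1 else s powr \<alpha>)"

definition gfun :: "nat \<Rightarrow> (nat \<Rightarrow> real) \<Rightarrow> (nat \<Rightarrow> real) \<Rightarrow> real \<Rightarrow> real" where
  "gfun N a \<alpha> s = (\<Sum>i=0..N. a i * pw s (\<alpha> i))"

definition Ffun :: "nat \<Rightarrow> (nat \<Rightarrow> real) \<Rightarrow> (nat \<Rightarrow> real) \<Rightarrow> real^3 \<Rightarrow> real \<Rightarrow> real^3 \<Rightarrow> real^3" where
  "Ffun N a \<alpha> k z v = gfun N a \<alpha> (norm v) *\<^sub>R v + z *\<^sub>R cross3 k v"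

definition Xfun :: "nat \<Rightarrow> (nat \<Rightarrow> real) \<Rightarrow> (nat \<Rightarrow> real) \<Rightarrow> real^3 \<Rightarrow> real \<Rightarrow> real \<Rightarrow> real^3 \<Rightarrow> real^3" where
  "Xfun N a \<alpha> k Rs z y = inv (Ffun N a \<alpha> k (Rs * z)) y"

definition Zfun :: "real^3 \<Rightarrow> real \<Rightarrow> real \<Rightarrow> (real \<Rightarrow> real^3) \<Rightarrow> real^3 \<Rightarrow> real \<Rightarrow> real^3" where
  "Zfun k G \<Omega> e0 x t = - (G *\<^sub>R e0 t) + \<Omega>\<^sup>2 *\<^sub>R cross3 k (cross3 k x)"

definition smooth_fun :: "(real \<Rightarrow> real^3) \<Rightarrow> bool" where
  "smooth_fun f \<longleftrightarrow> (\<exists>D :: nat \<Rightarrow> real \<Rightarrow> real^3. D 0 = f \<and>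
      (\<forall>n t. (D n has_vector_derivative D (Suc n) t) (at t)))"

definition pd :: "'n::finite \<Rightarrow> (real^'n \<Rightarrow> real) \<Rightarrow> real^'n \<Rightarrow> real" where
  "pd i f x = frechet_derivative f (at x) (axis i 1)"

definition grad :: "(real^'n::finite \<Rightarrow> real) \<Rightarrow> real^'n \<Rightarrow> real^'n" where
  "grad f x = (\<chi> i. pd i f x)"

definition divg :: "(real^'n::finite \<Rightarrow> real^'n) \<Rightarrow> real^'n \<Rightarrow> real" where
  "divg W x = (\<Sum>i\<in>UNIV. frechet_derivative W (at x) (axis i 1) $ i)"

text \<open>Open bounded set with C^1 boundary: locally, after a rigid motion, U is the
  region above the graph of a C^1 function of two variables.\<close>
definition C1_boundary :: "(real^3) set \<Rightarrow> bool" where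
  "C1_boundary U \<longleftrightarrow> (\<forall>p\<in>frontier U. \<exists>r>0. \<exists>Q \<gamma>.
      orthogonal_transformation (Q :: real^3 \<Rightarrow> real^3) \<and>
      (\<forall>y. (\<gamma> :: real^2 \<Rightarrow> real) differentiable (at y)) \<and>
      (\<forall>i. continuous_on UNIV (pd i \<gamma>)) \<and>
      U \<inter> ball p r = {x \<in> ball p r. Q (x - p) $ 3 > \<gamma> (vector [Q (x - p) $ 1, Q (x - p) $ 2])})"

text \<open>u in C^{2,1}_{x,t}(U_T), U_T = U x (0,T]; time derivative at t = T is one-sided
  (taken within (0,T]).\<close>
definition C21 :: "(real^3) set \<Rightarrow> real \<Rightarrow> (real^3 \<Rightarrow> real \<Rightarrow> real) \<Rightarrow> bool" where
  "C21 U T u \<longleftrightarrow>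
     (let UT = {(x,t). x \<in> U \<and> 0 < t \<and> t \<le> T} in
      (\<forall>(x,t)\<in>UT. (\<lambda>y. u y t) differentiable (at x) \<and>
         (\<forall>i. (\<lambda>y. pd i (\<lambda>z. u z t) y) differentiable (at x)) \<and>
         (\<lambda>s. u x s) differentiable (at t within {0<..T})) \<and>
      continuous_on UT (\<lambda>(x,t). u x t) \<and>
      (\<forall>i. continuous_on UT (\<lambda>(x,t). pd i (\<lambda>z. u z t) x)) \<and>
      (\<forall>i j. continuous_on UT (\<lambda>(x,t). pd j (pd i (\<lambda>z. u z t)) x)) \<and>
      continuous_on UT (\<lambda>(x,t). vector_derivative (\<lambda>s. u x s) (at t within {0<..T})))"

end

theory Submission
  imports Defs
begin

lemma dir_deriv:
  fixes f :: "'a::real_normed_vector \<Rightarrow> real"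
  assumes "f differentiable at (y + s *\<^sub>R v)"
  shows "((\<lambda>s. f (y + s *\<^sub>R v)) has_real_derivative frechet_derivative f (at (y + s *\<^sub>R v)) v) (at s)"
proof -
  let ?D = "frechet_derivative f (at (y + s *\<^sub>R v))"
  have d: "(f has_derivative ?D) (at (y + s *\<^sub>R v))"
    using assms frechet_derivative_works by blast
  have l: "linear ?D" using d has_derivative_linear by blast
  have "((\<lambda>s. y + s *\<^sub>R v) has_derivative (\<lambda>h. h *\<^sub>R v)) (at s)"
    by (auto intro!: derivative_eq_intros)
  from has_derivative_compose[OF this d]
  have "((\<lambda>s. f (y + s *\<^sub>R v)) has_derivative (\<lambda>h. ?D (h *\<^sub>R v))) (at s)" by simp
  moreover have "(\<lambda>h. ?D (h *\<^sub>R v)) = (*) (?D v)"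
    using l by (auto simp: linear_scale)
  ultimately show ?thesis by (simp add: has_field_derivative_def)
qed

lemma pd_dir:
  fixes f :: "real^'n \<Rightarrow> real"
  assumes "f differentiable at (y + s *\<^sub>R axis i 1)"
  shows "((\<lambda>s. f (y + s *\<^sub>R axis i 1)) has_real_derivative pd i f (y + s *\<^sub>R axis i 1)) (at s)"
  using dir_deriv[OF assms] unfolding pd_def by simp

lemma schwarz_aux:
  fixes f :: "real^'n \<Rightarrow> real"
  assumes S: "\<And>s t. 0 \<le> s \<Longrightarrow> s \<le> h \<Longrightarrow> 0 \<le> t \<Longrightarrow> t \<le> h \<Longrightarrow> x + s *\<^sub>R axis i 1 + t *\<^sub>R axis j 1 \<in> S"
    and h: "0 < h"
    and d1: "\<And>y. y\<in>S \<Longrightarrow> f differentiable at y"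
    and d2: "\<And>y. y\<in>S \<Longrightarrow> pd i f differentiable at y"
  shows "\<exists>s t. 0 < s \<and> s < h \<and> 0 < t \<and> t < h \<and>
     f (x + h *\<^sub>R axis i 1 + h *\<^sub>R axis j 1) - f (x + h *\<^sub>R axis i 1) - f (x + h *\<^sub>R axis j 1) + f x
      = h\<^sup>2 * pd j (pd i f) (x + s *\<^sub>R axis i 1 + t *\<^sub>R axis j 1)"
proof -
  let ?ei = "axis i 1 :: real^'n" and ?ej = "axis j 1 :: real^'n"
  define \<phi> where "\<phi> s = f (x + h *\<^sub>R ?ej + s *\<^sub>R ?ei) - f (x + s *\<^sub>R ?ei)" for s
  have "\<exists>z. 0 < z \<and> z < h \<and> \<phi> h - \<phi> 0 = (h - 0) *
      (pd i f (x + h *\<^sub>R ?ej + z *\<^sub>R ?ei) - pd i f (x + z *\<^sub>R ?ei))"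
  proof (rule MVT2[OF h])
    fix s assume s: "0 \<le> s" "s \<le> h"
    have m1: "x + h *\<^sub>R ?ej + s *\<^sub>R ?ei \<in> S" using S[of s h] s h by (simp add: algebra_simps)
    have m2: "x + s *\<^sub>R ?ei \<in> S" using S[of s 0] s h by simp
    show "(\<phi> has_real_derivative (pd i f (x + h *\<^sub>R ?ej + s *\<^sub>R ?ei) - pd i f (x + s *\<^sub>R ?ei))) (at s)"
      unfolding \<phi>_def
      by (intro DERIV_diff pd_dir d1 m1 m2)
  qed
  then obtain s where s: "0 < s" "s < h" and e1: "\<phi> h - \<phi> 0 = h *
      (pd i f (x + h *\<^sub>R ?ej + s *\<^sub>R ?ei) - pd i f (x + s *\<^sub>R ?ei))" by auto
  have "\<exists>z. 0 < z \<and> z < h \<and> pd i f (x + s *\<^sub>R ?ei + h *\<^sub>R ?ej) - pd i f (x + s *\<^sub>R ?ei + 0 *\<^sub>R ?ej)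
      = (h - 0) * pd j (pd i f) (x + s *\<^sub>R ?ei + z *\<^sub>R ?ej)"
  proof (rule MVT2[OF h])
    fix t assume t: "0 \<le> t" "t \<le> h"
    have m: "x + s *\<^sub>R ?ei + t *\<^sub>R ?ej \<in> S" using S[of s t] s t by simp
    show "((\<lambda>t. pd i f (x + s *\<^sub>R ?ei + t *\<^sub>R ?ej)) has_real_derivative pd j (pd i f) (x + s *\<^sub>R ?ei + t *\<^sub>R ?ej)) (at t)"
      by (intro pd_dir d2 m)
  qed
  then obtain t where t: "0 < t" "t < h" and e2: "pd i f (x + s *\<^sub>R ?ei + h *\<^sub>R ?ej) - pd i f (x + s *\<^sub>R ?ei + 0 *\<^sub>R ?ej)
      = h * pd j (pd i f) (x + s *\<^sub>R ?ei + t *\<^sub>R ?ej)" by auto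
  have "f (x + h *\<^sub>R ?ei + h *\<^sub>R ?ej) - f (x + h *\<^sub>R ?ei) - f (x + h *\<^sub>R ?ej) + f x = \<phi> h - \<phi> 0"
    unfolding \<phi>_def by (simp add: algebra_simps)
  also have "\<dots> = h\<^sup>2 * pd j (pd i f) (x + s *\<^sub>R ?ei + t *\<^sub>R ?ej)"
    using e1 e2 by (simp add: algebra_simps power2_eq_square)
  finally show ?thesis using s t by blast
qed

lemma schwarz:
  fixes f :: "real^'n \<Rightarrow> real"
  assumes "open S" "x \<in> S"
    and d1: "\<And>y. y\<in>S \<Longrightarrow> f differentiable at y"
    and d2: "\<And>y. y\<in>S \<Longrightarrow> pd i f differentiable at y"
    and d3: "\<And>y. y\<in>S \<Longrightarrow> pd j f differentiable at y"
    and c1: "continuous_on S (pd j (pd i f))" and c2: "continuous_on S (pd i (pd j f))"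
  shows "pd j (pd i f) x = pd i (pd j f) x"
proof (rule ccontr)
  let ?ei = "axis i 1 :: real^'n" and ?ej = "axis j 1 :: real^'n"
  assume ne: "pd j (pd i f) x \<noteq> pd i (pd j f) x"
  define e where "e = \<bar>pd j (pd i f) x - pd i (pd j f) x\<bar> / 2"
  have e: "e > 0" using ne by (simp add: e_def)
  obtain r where r: "r > 0" "ball x r \<subseteq> S" using assms(1,2) open_contains_ball by blast
  have "continuous (at x) (pd j (pd i f))" using c1 assms(1,2) continuous_on_eq_continuous_at by blast
  then obtain d1 where d1p: "d1 > 0" "\<And>y. dist y x < d1 \<Longrightarrow> dist (pd j (pd i f) y) (pd j (pd i f) x) < e"
    using e unfolding continuous_at_eps_delta by metis
  have "continuous (at x) (pd i (pd j f))" using c2 assms(1,2) continuous_on_eq_continuous_at by blast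
  then obtain d2 where d2p: "d2 > 0" "\<And>y. dist y x < d2 \<Longrightarrow> dist (pd i (pd j f) y) (pd i (pd j f) x) < e"
    using e unfolding continuous_at_eps_delta by metis
  define h where "h = Min {r, d1, d2} / 3"
  have h: "h > 0" "2 * h < r" "2 * h < d1" "2 * h < d2" using r d1p d2p by (auto simp: h_def)
  have nb: "norm (s *\<^sub>R ?ei + t *\<^sub>R ?ej) \<le> 2 * h" if "0 \<le> s" "s \<le> h" "0 \<le> t" "t \<le> h" for s t
  proof -
    have "norm (s *\<^sub>R ?ei + t *\<^sub>R ?ej) \<le> norm (s *\<^sub>R ?ei) + norm (t *\<^sub>R ?ej)" by (rule norm_triangle_ineq)
    also have "\<dots> = s + t" using that by simp
    finally show ?thesis using that h by linarith
  qed
  have S1: "x + s *\<^sub>R ?ei + t *\<^sub>R ?ej \<in> S" if "0 \<le> s" "s \<le> h" "0 \<le> t" "t \<le> h" for s t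
  proof -
    have "dist x (x + (s *\<^sub>R ?ei + t *\<^sub>R ?ej)) = norm (s *\<^sub>R ?ei + t *\<^sub>R ?ej)"
      by (metis add_diff_cancel_left' dist_commute dist_norm)
    then have "dist x (x + s *\<^sub>R ?ei + t *\<^sub>R ?ej) < r" using nb[OF that] h by (simp add: add.assoc)
    then show ?thesis using r by auto
  qed
  have S2: "x + s *\<^sub>R ?ej + t *\<^sub>R ?ei \<in> S" if "0 \<le> s" "s \<le> h" "0 \<le> t" "t \<le> h" for s t
    using S1[of t s] that by (simp add: algebra_simps)
  obtain s t where st: "0 < s" "s < h" "0 < t" "t < h" and E1:
     "f (x + h *\<^sub>R ?ei + h *\<^sub>R ?ej) - f (x + h *\<^sub>R ?ei) - f (x + h *\<^sub>R ?ej) + f x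
      = h\<^sup>2 * pd j (pd i f) (x + s *\<^sub>R ?ei + t *\<^sub>R ?ej)"
    using schwarz_aux[of h x i j S f, OF S1 h(1) d1 d2] by blast
  obtain s' t' where st': "0 < s'" "s' < h" "0 < t'" "t' < h" and E2:
     "f (x + h *\<^sub>R ?ej + h *\<^sub>R ?ei) - f (x + h *\<^sub>R ?ej) - f (x + h *\<^sub>R ?ei) + f x
      = h\<^sup>2 * pd i (pd j f) (x + s' *\<^sub>R ?ej + t' *\<^sub>R ?ei)"
    using schwarz_aux[of h x j i S f, OF S2 h(1) d1 d3] by blast
  have "h\<^sup>2 * pd j (pd i f) (x + s *\<^sub>R ?ei + t *\<^sub>R ?ej) = h\<^sup>2 * pd i (pd j f) (x + s' *\<^sub>R ?ej + t' *\<^sub>R ?ei)"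
    using E1 E2 by (simp add: algebra_simps)
  then have eq: "pd j (pd i f) (x + s *\<^sub>R ?ei + t *\<^sub>R ?ej) = pd i (pd j f) (x + s' *\<^sub>R ?ej + t' *\<^sub>R ?ei)"
    using h by simp
  have "dist (x + s *\<^sub>R ?ei + t *\<^sub>R ?ej) x < d1" using nb[of s t] st h by (simp add: dist_norm)
  then have a1: "dist (pd j (pd i f) (x + s *\<^sub>R ?ei + t *\<^sub>R ?ej)) (pd j (pd i f) x) < e" using d1p by blast
  have "dist (x + s' *\<^sub>R ?ej + t' *\<^sub>R ?ei) x < d2" using nb[of t' s'] st' h by (simp add: dist_norm algebra_simps)
  then have a2: "dist (pd i (pd j f) (x + s' *\<^sub>R ?ej + t' *\<^sub>R ?ei)) (pd i (pd j f) x) < e" using d2p by blast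
  from a1 a2 eq have "\<bar>pd j (pd i f) x - pd i (pd j f) x\<bar> < 2 * e" by (simp add: dist_real_def)
  then show False by (simp add: e_def)
qed

lemma basis_exp_real: "(\<Sum>i\<in>UNIV. (h$i) *\<^sub>R axis i 1) = (h::real^'n)"
  using basis_expansion[of h] by (simp add: scalar_mult_eq_scaleR)

lemma linear_expand:
  fixes L :: "real^'n \<Rightarrow> real"
  assumes "linear L"
  shows "L h = (\<Sum>i\<in>UNIV. h$i * L (axis i 1))"
proof -
  have "L h = L (\<Sum>i\<in>UNIV. (h$i) *\<^sub>R axis i 1)" by (simp add: basis_exp_real)
  also have "\<dots> = (\<Sum>i\<in>UNIV. h$i * L (axis i 1))"
    using assms by (simp add: linear_sum linear_scale)
  finally show ?thesis .
qed

lemma fd_expand: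
  fixes v :: "real^'n \<Rightarrow> real"
  assumes "v differentiable at y"
  shows "frechet_derivative v (at y) h = (\<Sum>i\<in>UNIV. h$i * pd i v y)"
proof -
  have "linear (frechet_derivative v (at y))"
    using assms frechet_derivative_works has_derivative_linear by blast
  then show ?thesis unfolding pd_def by (rule linear_expand)
qed

lemma grad_zero:
  fixes v :: "real^'n \<Rightarrow> real"
  assumes "open S" "x \<in> S" "\<And>y. y\<in>S \<Longrightarrow> v y \<le> v x" "v differentiable at x"
  shows "frechet_derivative v (at x) = (\<lambda>_. 0)" "pd i v x = 0"
proof -
  have d: "(v has_derivative frechet_derivative v (at x)) (at x)"
    using assms frechet_derivative_works by blast
  show "frechet_derivative v (at x) = (\<lambda>_. 0)"
    using differential_zero_maxmin[OF assms(2,1) d] assms(3) by blast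
  then show "pd i v x = 0" by (simp add: pd_def)
qed

lemma second_order:
  fixes v :: "real^'n \<Rightarrow> real"
  assumes S: "open S" "x \<in> S" and mx: "\<And>y. y\<in>S \<Longrightarrow> v y \<le> v x"
    and dv: "\<And>y. y\<in>S \<Longrightarrow> v differentiable at y"
    and dp: "\<And>i. pd i v differentiable at x"
  shows "(\<Sum>i\<in>UNIV. h$i * frechet_derivative (pd i v) (at x) h) \<le> 0"
proof (rule ccontr)
  define c where "c = (\<Sum>i\<in>UNIV. h$i * frechet_derivative (pd i v) (at x) h)"
  assume "\<not> (\<Sum>i\<in>UNIV. h$i * frechet_derivative (pd i v) (at x) h) \<le> 0"
  then have c: "c > 0" by (simp add: c_def)
  define \<psi> where "\<psi> s = (\<Sum>i\<in>UNIV. h$i * pd i v (x + s *\<^sub>R h))" for s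
  have "(\<psi> has_real_derivative c) (at 0)"
    unfolding \<psi>_def c_def
  proof (intro DERIV_sum DERIV_cmult)
    fix i
    show "((\<lambda>s. pd i v (x + s *\<^sub>R h)) has_real_derivative frechet_derivative (pd i v) (at x) h) (at 0)"
      using dir_deriv[of "pd i v" x 0 h] dp by simp
  qed
  then have "(\<psi> has_real_derivative c) (at 0 within {0<..})" by (rule has_field_derivative_at_within)
  then have "((\<lambda>s. (\<psi> s - \<psi> 0) / (s - 0)) \<longlongrightarrow> c) (at_right 0)"
    using has_field_derivative_iff by blast
  moreover have "\<psi> 0 = 0" unfolding \<psi>_def using grad_zero(2)[OF S mx dv[OF S(2)]] by simp
  ultimately have "((\<lambda>s. \<psi> s / s) \<longlongrightarrow> c) (at_right 0)" by simp
  then have ev1: "eventually (\<lambda>s. 0 < \<psi> s / s) (at_right 0)"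
    using c order_tendstoD(1) by blast
  obtain r where r: "r > 0" "ball x r \<subseteq> S" using S open_contains_ball by blast
  have ev2: "eventually (\<lambda>s. s * (norm h + 1) < r) (at_right (0::real))"
  proof -
    have "((\<lambda>s. s * (norm h + 1)) \<longlongrightarrow> 0 * (norm h + 1)) (at_right (0::real))"
      by (intro tendsto_intros)
    then show ?thesis using r order_tendstoD(2) by fastforce
  qed
  from eventually_conj[OF ev1 ev2] obtain b where b: "b > 0"
    and bP: "\<And>s. 0 < s \<Longrightarrow> s < b \<Longrightarrow> 0 < \<psi> s / s \<and> s * (norm h + 1) < r"
    unfolding eventually_at_right_field by auto
  define s0 where "s0 = b / 2"
  have s0: "0 < s0" "s0 < b" using b by (auto simp: s0_def)
  have inS: "x + s *\<^sub>R h \<in> S" if "0 \<le> s" "s \<le> s0" for s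
  proof -
    have "s * (norm h + 1) < r"
    proof (cases "s = 0")
      case True then show ?thesis using r by simp
    next
      case False then show ?thesis using bP[of s] that s0 by auto
    qed
    moreover have "norm (s *\<^sub>R h) \<le> s * (norm h + 1)" using that by (simp add: algebra_simps)
    ultimately have "dist x (x + s *\<^sub>R h) < r"
      by (metis add_diff_cancel_left' dist_commute dist_norm order_le_less_trans)
    then show ?thesis using r by auto
  qed
  have "\<exists>z. 0 < z \<and> z < s0 \<and> v (x + s0 *\<^sub>R h) - v (x + 0 *\<^sub>R h) = (s0 - 0) * \<psi> z"
  proof (rule MVT2[OF s0(1)])
    fix s assume s: "0 \<le> s" "s \<le> s0"
    have "((\<lambda>s. v (x + s *\<^sub>R h)) has_real_derivative frechet_derivative v (at (x + s *\<^sub>R h)) h) (at s)"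
      using dir_deriv dv inS s by blast
    moreover have "frechet_derivative v (at (x + s *\<^sub>R h)) h = \<psi> s"
      unfolding \<psi>_def using fd_expand dv inS s by blast
    ultimately show "((\<lambda>s. v (x + s *\<^sub>R h)) has_real_derivative \<psi> s) (at s)" by simp
  qed
  then obtain z where z: "0 < z" "z < s0" and eq: "v (x + s0 *\<^sub>R h) - v x = s0 * \<psi> z" by auto
  have "0 < \<psi> z / z" using bP[of z] z s0 by auto
  then have "\<psi> z > 0" using z by (simp add: zero_less_divide_iff)
  then have "v (x + s0 *\<^sub>R h) > v x" using eq s0 by (simp add: algebra_simps)
  moreover have "v (x + s0 *\<^sub>R h) \<le> v x" using mx inS s0 by simp
  ultimately show False by simp
qed

lemma alpha_pos:
  assumes alpha0: "\<alpha> 0 = 0" and mono: "\<And>i. i < N \<Longrightarrow> \<alpha> i < \<alpha> (Suc i)"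
  shows "i \<le> N \<Longrightarrow> 0 < i \<Longrightarrow> (0::real) < \<alpha> i"
proof (induction i)
  case 0 then show ?case by simp
next
  case (Suc i)
  show ?case
  proof (cases "i = 0")
    case True then show ?thesis using mono[of 0] Suc alpha0 by simp
  next
    case False then show ?thesis using Suc mono[of i] by simp
  qed
qed

lemma alpha_nonneg:
  assumes alpha0: "\<alpha> 0 = 0" and mono: "\<And>i. i < N \<Longrightarrow> \<alpha> i < \<alpha> (Suc i)"
  shows "i \<le> N \<Longrightarrow> (0::real) \<le> \<alpha> i"
proof (cases "i = 0")
  case True then show ?thesis using alpha0 by simp
next
  case False
  assume "i \<le> N" then show ?thesis using alpha_pos[OF assms] False by force
qed

lemma pw_nonneg: "pw s \<alpha> \<ge> 0" by (simp add: pw_def)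

lemma g_ge:
  assumes "\<And>i. i \<le> N \<Longrightarrow> a i > 0" "\<alpha> 0 = 0"
  shows "gfun N a \<alpha> s \<ge> a 0"
proof -
  have "gfun N a \<alpha> s = a 0 * pw s (\<alpha> 0) + (\<Sum>i=Suc 0..N. a i * pw s (\<alpha> i))"
    unfolding gfun_def by (simp add: sum.atLeast_Suc_atMost)
  moreover have "(\<Sum>i=Suc 0..N. a i * pw s (\<alpha> i)) \<ge> 0"
    using assms(1) by (intro sum_nonneg) (simp add: pw_nonneg less_imp_le)
  ultimately show ?thesis using assms(2) by (simp add: pw_def)
qed

lemma g_zero:
  assumes "\<alpha> 0 = 0" "\<And>i. i \<le> N \<Longrightarrow> 0 < i \<Longrightarrow> (0::real) < \<alpha> i"
  shows "gfun N a \<alpha> 0 = a 0"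
proof -
  have "gfun N a \<alpha> 0 = a 0 * pw 0 (\<alpha> 0) + (\<Sum>i=Suc 0..N. a i * pw 0 (\<alpha> i))"
    unfolding gfun_def by (simp add: sum.atLeast_Suc_atMost)
  moreover have "(\<Sum>i=Suc 0..N. a i * pw 0 (\<alpha> i)) = 0"
  proof (intro sum.neutral ballI)
    fix i assume "i \<in> {Suc 0..N}"
    then have "\<alpha> i > 0" using assms(2) by auto
    then show "a i * pw 0 (\<alpha> i) = 0" by (simp add: pw_def)
  qed
  ultimately show ?thesis using assms(1) by (simp add: pw_def)
qed

lemma pw_cont:
  assumes "\<alpha> \<ge> 0" "continuous_on S f" "\<And>x. x \<in> S \<Longrightarrow> f x \<ge> 0"
  shows "continuous_on S (\<lambda>x. pw (f x) \<alpha>)"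
proof (cases "\<alpha> = 0")
  case True then show ?thesis by (simp add: pw_def)
next
  case False
  then have "continuous_on S (\<lambda>x. f x powr \<alpha>)"
    using assms by (intro continuous_on_powr') auto
  then show ?thesis using False by (simp add: pw_def)
qed

lemma g_cont:
  assumes "\<And>i. i \<le> N \<Longrightarrow> (0::real) \<le> \<alpha> i" "continuous_on S f" "\<And>x. x \<in> S \<Longrightarrow> f x \<ge> 0"
  shows "continuous_on S (\<lambda>x. gfun N a \<alpha> (f x))"
  unfolding gfun_def using assms
  by (intro continuous_on_sum continuous_on_mult continuous_on_const pw_cont) auto

definition gder :: "nat \<Rightarrow> (nat \<Rightarrow> real) \<Rightarrow> (nat \<Rightarrow> real) \<Rightarrow> real \<Rightarrow> real" where
  "gder N a \<alpha> s = (\<Sum>i=0..N. a i * (if \<alpha> i = 0 then 0 else \<alpha> i * s powr (\<alpha> i - 1)))"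

lemma pw_deriv:
  assumes "s > 0"
  shows "((\<lambda>s. pw s \<alpha>) has_real_derivative (if \<alpha> = 0 then 0 else \<alpha> * s powr (\<alpha> - 1))) (at s)"
proof (cases "\<alpha> = 0")
  case True then show ?thesis by (simp add: pw_def)
next
  case False
  then have "(\<lambda>s. pw s \<alpha>) = (\<lambda>s. s powr \<alpha>)" by (simp add: pw_def fun_eq_iff)
  then show ?thesis using False has_real_derivative_powr[OF assms] by simp
qed

lemma g_deriv:
  assumes "s > 0"
  shows "(gfun N a \<alpha> has_real_derivative gder N a \<alpha> s) (at s)"
proof -
  have "((\<lambda>s. \<Sum>i=0..N. a i * pw s (\<alpha> i)) has_real_derivative gder N a \<alpha> s) (at s)"
    unfolding gder_def by (intro DERIV_sum DERIV_cmult pw_deriv assms)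
  then show ?thesis by (simp add: gfun_def[abs_def])
qed

lemma gder_nonneg:
  assumes "\<And>i. i \<le> N \<Longrightarrow> a i > 0" "\<And>i. i \<le> N \<Longrightarrow> (0::real) \<le> \<alpha> i"
  shows "gder N a \<alpha> s \<ge> 0"
  unfolding gder_def
proof (intro sum_nonneg)
  fix i assume "i \<in> {0..N}"
  then have "a i > 0" "\<alpha> i \<ge> 0" using assms by auto
  then show "0 \<le> a i * (if \<alpha> i = 0 then 0 else \<alpha> i * s powr (\<alpha> i - 1))"
    by (simp add: mult_nonneg_nonneg)
qed

lemma G_deriv:
  fixes w :: "'v::real_inner"
  assumes a_pos: "\<And>i. i \<le> N \<Longrightarrow> a i > 0" and alpha0: "\<alpha> 0 = 0"
    and mono: "\<And>i. i < N \<Longrightarrow> \<alpha> i < \<alpha> (Suc i)"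
  shows "\<exists>\<beta>\<ge>0. ((\<lambda>v. gfun N a \<alpha> (norm v) *\<^sub>R v) has_derivative
            (\<lambda>h. gfun N a \<alpha> (norm w) *\<^sub>R h + (\<beta> * (w \<bullet> h)) *\<^sub>R w)) (at w)"
proof (cases "w = 0")
  case True
  have ap: "\<And>i. i \<le> N \<Longrightarrow> 0 < i \<Longrightarrow> 0 < \<alpha> i" using alpha_pos[OF alpha0 mono] by blast
  have an: "\<And>i. i \<le> N \<Longrightarrow> 0 \<le> \<alpha> i" using alpha_nonneg[OF alpha0 mono] by blast
  have g0: "gfun N a \<alpha> 0 = a 0" using g_zero[of \<alpha> N a, OF alpha0 ap] by blast
  have gc: "continuous_on UNIV (\<lambda>v::'v. gfun N a \<alpha> (norm v))"
    using g_cont[of N \<alpha> UNIV norm a, OF an] by (simp add: continuous_on_norm_id)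
  then have "isCont (\<lambda>v::'v. gfun N a \<alpha> (norm v)) 0"
    using continuous_on_eq_continuous_at open_UNIV by blast
  then have "((\<lambda>v::'v. gfun N a \<alpha> (norm v)) \<longlongrightarrow> a 0) (at 0)"
    using g0 by (simp add: isCont_def)
  then have "((\<lambda>v::'v. gfun N a \<alpha> (norm v) - a 0) \<longlongrightarrow> 0) (at 0)"
    using LIM_zero by blast
  then have lim: "((\<lambda>v::'v. \<bar>gfun N a \<alpha> (norm v) - a 0\<bar>) \<longlongrightarrow> 0) (at 0)"
    by (rule tendsto_rabs_zero)
  have "((\<lambda>v. gfun N a \<alpha> (norm v) *\<^sub>R v) has_derivative (\<lambda>h. a 0 *\<^sub>R h)) (at (0::'v))"
    unfolding has_derivative_at
  proof
    show "bounded_linear (\<lambda>h::'v. a 0 *\<^sub>R h)" by (rule bounded_linear_scaleR_right)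
    have ev: "\<forall>\<^sub>F h in at (0::'v). \<bar>gfun N a \<alpha> (norm h) - a 0\<bar> =
        norm (gfun N a \<alpha> (norm (0 + h)) *\<^sub>R (0 + h) - gfun N a \<alpha> (norm (0::'v)) *\<^sub>R (0::'v) - a 0 *\<^sub>R (h::'v)) / norm h"
    proof -
      have "\<forall>h. h \<noteq> 0 \<longrightarrow> \<bar>gfun N a \<alpha> (norm h) - a 0\<bar> =
        norm (gfun N a \<alpha> (norm (0 + h)) *\<^sub>R (0 + h) - gfun N a \<alpha> (norm (0::'v)) *\<^sub>R (0::'v) - a 0 *\<^sub>R (h::'v)) / norm h"
        by (simp add: scaleR_diff_left[symmetric])
      then show ?thesis unfolding eventually_at by (auto intro!: exI[of _ 1])
    qed
    show "(\<lambda>h. norm (gfun N a \<alpha> (norm (0 + h)) *\<^sub>R (0 + h) - gfun N a \<alpha> (norm (0::'v)) *\<^sub>R (0::'v) - a 0 *\<^sub>R (h::'v)) / norm h) \<midarrow>0\<rightarrow> 0"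
      using Lim_transform_eventually[OF lim ev] by simp
  qed
  then show ?thesis using True g0 by (intro exI[of _ 0]) simp
next
  case False
  have an: "\<And>i. i \<le> N \<Longrightarrow> 0 \<le> \<alpha> i" using alpha_nonneg[OF alpha0 mono] by blast
  let ?g' = "gder N a \<alpha> (norm w)"
  have dg: "(gfun N a \<alpha> has_derivative (*) ?g') (at (norm w))"
    using g_deriv[of "norm w" N a \<alpha>] False by (simp add: has_field_derivative_def)
  have "((\<lambda>v. gfun N a \<alpha> (norm v)) has_derivative (\<lambda>h. ?g' * (h \<bullet> sgn w))) (at w)"
    using has_derivative_compose[OF has_derivative_norm[OF False] dg] by simp
  from has_derivative_scaleR[OF this has_derivative_ident]
  have "((\<lambda>v. gfun N a \<alpha> (norm v) *\<^sub>R v) has_derivative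
      (\<lambda>h. gfun N a \<alpha> (norm w) *\<^sub>R h + (?g' * (h \<bullet> sgn w)) *\<^sub>R w)) (at w)" by simp
  moreover have "(\<lambda>h. gfun N a \<alpha> (norm w) *\<^sub>R h + (?g' * (h \<bullet> sgn w)) *\<^sub>R w)
      = (\<lambda>h. gfun N a \<alpha> (norm w) *\<^sub>R h + ((?g' / norm w) * (w \<bullet> h)) *\<^sub>R w)"
    by (simp add: sgn_div_norm inner_commute divide_inverse ac_simps)
  ultimately have "((\<lambda>v. gfun N a \<alpha> (norm v) *\<^sub>R v) has_derivative
      (\<lambda>h. gfun N a \<alpha> (norm w) *\<^sub>R h + ((?g' / norm w) * (w \<bullet> h)) *\<^sub>R w)) (at w)" by simp
  moreover have "?g' / norm w \<ge> 0" using gder_nonneg[OF a_pos an] by simp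
  ultimately show ?thesis by blast
qed

lemma cross_cross: "cross3 k (cross3 k y) = (k \<bullet> y) *\<^sub>R k - (k \<bullet> k) *\<^sub>R y"
  by (simp add: vec_eq_iff forall_3 cross_components inner_vec_def sum_3 algebra_simps)


lemma F_solve:
  fixes k y p q :: "real^3" and c g z :: real
  assumes k: "norm k = 1" and g: "g > 0"
  defines "c \<equiv> k \<bullet> y" and "p \<equiv> y - (k \<bullet> y) *\<^sub>R k" and "q \<equiv> cross3 k y"
  defines "v \<equiv> (c / g) *\<^sub>R k + (1 / (g\<^sup>2 + z\<^sup>2)) *\<^sub>R (g *\<^sub>R p - z *\<^sub>R q)"
  shows "g *\<^sub>R v + z *\<^sub>R cross3 k v = y"
    and "(norm v)\<^sup>2 = c\<^sup>2 / g\<^sup>2 + (norm p)\<^sup>2 / (g\<^sup>2 + z\<^sup>2)"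
    and "c\<^sup>2 + (norm p)\<^sup>2 = (norm y)\<^sup>2"
proof -
  have kk: "k \<bullet> k = 1" using k by (simp add: norm_eq_1)
  have kp: "cross3 k p = q" unfolding p_def q_def by (simp add: vec_eq_iff forall_3 cross_components algebra_simps)
  have kq: "cross3 k q = - p" unfolding p_def q_def by (simp add: cross_cross kk)
  have pk: "p \<bullet> k = 0" unfolding p_def by (simp add: inner_diff_left inner_diff_right kk inner_commute)
  have qk: "q \<bullet> k = 0" unfolding q_def by (simp add: dot_cross_self)
  have pq: "p \<bullet> q = 0" unfolding p_def q_def by (simp add: inner_diff_left dot_cross_self)
  have nq: "q \<bullet> q = p \<bullet> p"
  proof -
    have "(norm q)\<^sup>2 + c\<^sup>2 = (norm y)\<^sup>2" using norm_cross_dot[of k y] k unfolding q_def c_def by simp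
    moreover have "p \<bullet> p = y \<bullet> y - c\<^sup>2" unfolding p_def c_def
      by (simp add: inner_diff_left inner_diff_right kk inner_commute power2_eq_square)
    ultimately show ?thesis by (simp add: power2_norm_eq_inner)
  qed
  have gz: "g\<^sup>2 + z\<^sup>2 > 0" using g by (simp add: add_pos_nonneg)
  have kv: "cross3 k v = (1 / (g\<^sup>2 + z\<^sup>2)) *\<^sub>R (g *\<^sub>R q + z *\<^sub>R p)"
  proof -
    have lin: "cross3 k (a *\<^sub>R k + b *\<^sub>R (c1 *\<^sub>R p - c2 *\<^sub>R q)) = b *\<^sub>R (c1 *\<^sub>R cross3 k p - c2 *\<^sub>R cross3 k q)"
      for a b c1 c2 by (simp add: vec_eq_iff forall_3 cross_components algebra_simps)
    show ?thesis unfolding v_def lin kp kq by (simp add: algebra_simps)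
  qed
  have "g *\<^sub>R v + z *\<^sub>R cross3 k v = c *\<^sub>R k + (1 / (g\<^sup>2 + z\<^sup>2)) *\<^sub>R ((g\<^sup>2 + z\<^sup>2) *\<^sub>R p)"
    unfolding kv unfolding v_def using g by (simp add: algebra_simps power2_eq_square)
  also have "\<dots> = y" using gz g unfolding p_def c_def by simp
  finally show "g *\<^sub>R v + z *\<^sub>R cross3 k v = y" .
  have "(norm v)\<^sup>2 = v \<bullet> v" by (simp add: power2_norm_eq_inner)
  also have "\<dots> = (c / g)\<^sup>2 + (1 / (g\<^sup>2 + z\<^sup>2))\<^sup>2 * (g\<^sup>2 * (p \<bullet> p) + z\<^sup>2 * (q \<bullet> q))"
  proof -
    define s where "s = 1 / (g\<^sup>2 + z\<^sup>2)"
    have kp0: "k \<bullet> p = 0" "k \<bullet> q = 0" "q \<bullet> p = 0" using pk qk pq by (simp_all add: inner_commute)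
    have AB: "((c / g) *\<^sub>R k) \<bullet> (s *\<^sub>R (g *\<^sub>R p - z *\<^sub>R q)) = 0"
      by (simp add: inner_diff_right kp0)
    have AA: "((c / g) *\<^sub>R k) \<bullet> ((c / g) *\<^sub>R k) = (c / g)\<^sup>2" by (simp add: kk power2_eq_square)
    have BB: "(s *\<^sub>R (g *\<^sub>R p - z *\<^sub>R q)) \<bullet> (s *\<^sub>R (g *\<^sub>R p - z *\<^sub>R q))
       = s\<^sup>2 * (g\<^sup>2 * (p \<bullet> p) + z\<^sup>2 * (q \<bullet> q))"
      by (simp add: inner_diff_left inner_diff_right kp0 pq power2_eq_square algebra_simps)
    have "v \<bullet> v = ((c / g) *\<^sub>R k) \<bullet> ((c / g) *\<^sub>R k) + 2 * (((c / g) *\<^sub>R k) \<bullet> (s *\<^sub>R (g *\<^sub>R p - z *\<^sub>R q)))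
       + (s *\<^sub>R (g *\<^sub>R p - z *\<^sub>R q)) \<bullet> (s *\<^sub>R (g *\<^sub>R p - z *\<^sub>R q))"
      unfolding v_def s_def[symmetric] by (simp add: inner_add_left inner_add_right inner_commute)
    then show ?thesis using AB AA BB by (simp add: s_def)
  qed
  also have "\<dots> = c\<^sup>2 / g\<^sup>2 + (norm p)\<^sup>2 / (g\<^sup>2 + z\<^sup>2)"
  proof -
    have "g\<^sup>2 * (p \<bullet> p) + z\<^sup>2 * (q \<bullet> q) = (g\<^sup>2 + z\<^sup>2) * (norm p)\<^sup>2"
      by (simp add: nq power2_norm_eq_inner algebra_simps)
    moreover have "(1 / (g\<^sup>2 + z\<^sup>2))\<^sup>2 * ((g\<^sup>2 + z\<^sup>2) * (norm p)\<^sup>2) = (norm p)\<^sup>2 / (g\<^sup>2 + z\<^sup>2)"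
      using gz by (simp add: power2_eq_square)
    ultimately show ?thesis by (simp add: power_divide)
  qed
  finally show "(norm v)\<^sup>2 = c\<^sup>2 / g\<^sup>2 + (norm p)\<^sup>2 / (g\<^sup>2 + z\<^sup>2)" .
  show "c\<^sup>2 + (norm p)\<^sup>2 = (norm y)\<^sup>2" unfolding p_def c_def power2_norm_eq_inner
    by (simp add: inner_diff_left inner_diff_right kk inner_commute power2_eq_square)
qed

lemma F_surj:
  fixes k y :: "real^3"
  assumes k: "norm k = 1" and a_pos: "\<And>i. i \<le> N \<Longrightarrow> a i > 0" and alpha0: "\<alpha> 0 = 0"
    and mono: "\<And>i. i < N \<Longrightarrow> \<alpha> i < \<alpha> (Suc i)"
  shows "Ffun N a \<alpha> k z (inv (Ffun N a \<alpha> k z) y) = y"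
proof -
  let ?g = "gfun N a \<alpha>"
  define c where "c = k \<bullet> y"
  define p where "p = y - (k \<bullet> y) *\<^sub>R k"
  define \<phi> where "\<phi> r = r\<^sup>2 - (c\<^sup>2 / (?g r)\<^sup>2 + (norm p)\<^sup>2 / ((?g r)\<^sup>2 + z\<^sup>2))" for r
  have a0: "a 0 > 0" using a_pos by simp
  have gge: "?g r \<ge> a 0" for r using g_ge[of N a \<alpha>, OF a_pos alpha0] by blast
  have gpos: "?g r > 0" for r using gge[of r] a0 by linarith
  have an: "\<And>i. i \<le> N \<Longrightarrow> 0 \<le> \<alpha> i" using alpha_nonneg[OF alpha0 mono] by blast
  define R where "R = norm y / a 0"
  have R0: "R \<ge> 0" using a0 by (simp add: R_def)
  have gc: "continuous_on {0..R} ?g"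
  proof -
    have "continuous_on {0..R} (\<lambda>x. gfun N a \<alpha> ((\<lambda>x. x) x))"
      apply (rule g_cont[where f="\<lambda>x. x"])
      using an apply blast
      apply (rule continuous_on_id)
      by simp
    then show ?thesis by simp
  qed
  have cont: "continuous_on {0..R} \<phi>"
  proof -
    have g2: "continuous_on {0..R} (\<lambda>r. (?g r)\<^sup>2)" by (intro continuous_intros gc)
    have nz1: "\<forall>r\<in>{0..R}. (?g r)\<^sup>2 \<noteq> 0" using gpos by (metis less_numeral_extra(3) zero_less_power)
    have nz2: "\<forall>r\<in>{0..R}. (?g r)\<^sup>2 + z\<^sup>2 \<noteq> 0" using gpos
      by (metis add_pos_nonneg less_numeral_extra(3) zero_less_power zero_le_power2)
    have c1: "continuous_on {0..R} (\<lambda>r. c\<^sup>2 / (?g r)\<^sup>2)"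
      by (rule continuous_on_divide[OF continuous_on_const g2 nz1])
    have c2: "continuous_on {0..R} (\<lambda>r. (norm p)\<^sup>2 / ((?g r)\<^sup>2 + z\<^sup>2))"
      by (rule continuous_on_divide[OF continuous_on_const continuous_on_add[OF g2 continuous_on_const] nz2])
    show ?thesis unfolding \<phi>_def[abs_def] by (intro continuous_on_diff continuous_on_add continuous_on_power continuous_on_id c1 c2)
  qed
  have "\<phi> 0 \<le> 0"
  proof -
    have "0 \<le> c\<^sup>2 / (?g 0)\<^sup>2" by simp
    moreover have "0 \<le> (norm p)\<^sup>2 / ((?g 0)\<^sup>2 + z\<^sup>2)" by simp
    moreover have "\<phi> 0 = - (c\<^sup>2 / (?g 0)\<^sup>2 + (norm p)\<^sup>2 / ((?g 0)\<^sup>2 + z\<^sup>2))" by (simp add: \<phi>_def)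
    ultimately show ?thesis by linarith
  qed
  moreover have "0 \<le> \<phi> R"
  proof -
    have "a 0 \<le> ?g R" by (rule gge)
    then have sq: "(a 0)\<^sup>2 \<le> (?g R)\<^sup>2" using a0 by (simp add: power_mono)
    have "c\<^sup>2 / (?g R)\<^sup>2 \<le> c\<^sup>2 / (a 0)\<^sup>2"
      using sq a0 gpos[of R] by (intro divide_left_mono) auto
    moreover have "(norm p)\<^sup>2 / ((?g R)\<^sup>2 + z\<^sup>2) \<le> (norm p)\<^sup>2 / (a 0)\<^sup>2"
    proof (intro divide_left_mono)
      show "(a 0)\<^sup>2 \<le> (?g R)\<^sup>2 + z\<^sup>2" using sq by (simp add: add_increasing2)
      have "(?g R)\<^sup>2 + z\<^sup>2 > 0" using gpos[of R] by (simp add: add_pos_nonneg)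
      then show "0 < ((?g R)\<^sup>2 + z\<^sup>2) * (a 0)\<^sup>2" using a0 by simp
    qed simp
    moreover have "c\<^sup>2 / (a 0)\<^sup>2 + (norm p)\<^sup>2 / (a 0)\<^sup>2 = (norm y)\<^sup>2 / (a 0)\<^sup>2"
    proof -
      have "c\<^sup>2 + (norm p)\<^sup>2 = (norm y)\<^sup>2"
        using F_solve(3)[OF k gpos[of 0], of y] unfolding c_def p_def by simp
      then show ?thesis by (simp add: add_divide_distrib[symmetric])
    qed
    moreover have "R\<^sup>2 = (norm y)\<^sup>2 / (a 0)\<^sup>2" by (simp add: R_def power_divide)
    ultimately have "c\<^sup>2 / (?g R)\<^sup>2 + (norm p)\<^sup>2 / ((?g R)\<^sup>2 + z\<^sup>2) \<le> R\<^sup>2"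
      by linarith
    then show ?thesis unfolding \<phi>_def by simp
  qed
  ultimately obtain r where r: "0 \<le> r" "r \<le> R" "\<phi> r = 0"
    using IVT'[of \<phi> 0 0 R, OF _ _ R0 cont] by auto
  define v where "v = (c / ?g r) *\<^sub>R k + (1 / ((?g r)\<^sup>2 + z\<^sup>2)) *\<^sub>R (?g r *\<^sub>R p - z *\<^sub>R cross3 k y)"
  have e1: "?g r *\<^sub>R v + z *\<^sub>R cross3 k v = y"
    using F_solve(1)[OF k gpos[of r], of y z] unfolding v_def c_def p_def by simp
  have "(norm v)\<^sup>2 = c\<^sup>2 / (?g r)\<^sup>2 + (norm p)\<^sup>2 / ((?g r)\<^sup>2 + z\<^sup>2)"
    using F_solve(2)[OF k gpos[of r], of y z] unfolding v_def c_def p_def by simp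
  then have "(norm v)\<^sup>2 = r\<^sup>2" using r(3) unfolding \<phi>_def by simp
  then have "norm v = r" using r(1) by (simp add: power2_eq_iff_nonneg)
  then have "Ffun N a \<alpha> k z v = y" using e1 by (simp add: Ffun_def)
  then have "y \<in> range (Ffun N a \<alpha> k z)" by blast
  then show ?thesis by (rule f_inv_into_f)
qed

lemma trace_transpose': "trace (transpose X) = trace (X::real^'n^'n)"
  by (simp add: trace_def transpose_def)

lemma matrix_add_rdistrib': "((A + B) ** C) = (A ** C) + (B ** (C::real^'n^'n))"
  for A B :: "real^'n^'n"
  by (simp add: matrix_matrix_mult_def vec_eq_iff sum.distrib algebra_simps)

lemma quad_trace:
  fixes X M :: "real^'n^'n"
  assumes Mneg: "\<And>h. h \<bullet> (M *v h) \<le> 0"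
  shows "trace (transpose X ** M ** X) \<le> 0"
proof -
  have "(transpose X ** M ** X)$i$i = (\<chi> j. X$j$i) \<bullet> (M *v (\<chi> j. X$j$i))" for i
  proof -
    have "(transpose X ** M ** X)$i$i = (\<Sum>j\<in>UNIV. (\<Sum>k\<in>UNIV. X$k$i * M$k$j) * X$j$i)"
      by (simp add: matrix_matrix_mult_def transpose_def)
    also have "\<dots> = (\<Sum>j\<in>UNIV. \<Sum>k\<in>UNIV. X$k$i * (M$k$j * X$j$i))"
      by (simp add: sum_distrib_right mult.assoc)
    also have "\<dots> = (\<Sum>k\<in>UNIV. \<Sum>j\<in>UNIV. X$k$i * (M$k$j * X$j$i))"
      by (rule sum.swap)
    also have "\<dots> = (\<Sum>k\<in>UNIV. X$k$i * (\<Sum>j\<in>UNIV. M$k$j * X$j$i))"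
      by (simp add: sum_distrib_left)
    also have "\<dots> = (\<chi> j. X$j$i) \<bullet> (M *v (\<chi> j. X$j$i))"
      by (simp add: matrix_vector_mult_def inner_vec_def)
    finally show ?thesis .
  qed
  then show ?thesis unfolding trace_def using Mneg by (simp add: sum_nonpos)
qed

lemma trace_key:
  fixes A C M :: "real^'n^'n" and w :: "real^'n"
  assumes CA: "C ** A = mat 1" and AC: "A ** C = mat 1"
    and MT: "transpose M = M" and Mneg: "\<And>h. h \<bullet> (M *v h) \<le> 0"
    and Asym: "A + transpose A = (2*g) *\<^sub>R mat 1 + (2*\<beta>) *\<^sub>R (\<chi> i j. w$i * w$j)"
    and g: "g \<ge> 0" and b: "\<beta> \<ge> 0"
  shows "trace (C ** M) \<le> 0"
proof -
  obtain j0 :: 'n where True by blast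
  define Wm :: "real^'n^'n" where "Wm = (\<chi> i j. if j = j0 then w$i else 0)"
  have P: "(\<chi> i j. w$i * w$j) = Wm ** transpose Wm"
    by (simp add: Wm_def matrix_matrix_mult_def transpose_def vec_eq_iff if_distrib sum.delta' cong: if_cong)
  have t1: "trace (C ** M) = trace (transpose C ** M)"
  proof -
    have "trace (C ** M) = trace (transpose (C ** M))" by (simp add: trace_transpose')
    also have "\<dots> = trace (M ** transpose C)" by (simp add: matrix_transpose_mul MT)
    also have "\<dots> = trace (transpose C ** M)" by (rule trace_mul_sym)
    finally show ?thesis .
  qed
  have e1: "C ** A ** transpose C = transpose C" using CA by simp
  have e2: "C ** transpose A ** transpose C = C"
  proof -
    have "C ** transpose A ** transpose C = transpose (C ** A ** transpose C)"
      by (simp add: matrix_transpose_mul matrix_mul_assoc)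
    then show ?thesis using e1 by simp
  qed
  have "C + transpose C = C ** (A + transpose A) ** transpose C"
    using e1 e2 by (simp add: matrix_add_ldistrib matrix_add_rdistrib')
  also have "\<dots> = (2*g) *\<^sub>R (C ** transpose C) + (2*\<beta>) *\<^sub>R ((C ** Wm) ** transpose (C ** Wm))"
    unfolding Asym P
    by (simp add: matrix_add_ldistrib matrix_add_rdistrib' matrix_scalar_ac scalar_matrix_assoc
        matrix_transpose_mul matrix_mul_assoc)
  finally have CC: "C + transpose C = (2*g) *\<^sub>R (C ** transpose C) + (2*\<beta>) *\<^sub>R ((C ** Wm) ** transpose (C ** Wm))" .
  have "2 * trace (C ** M) = trace ((C + transpose C) ** M)"
    using t1 by (simp add: matrix_add_rdistrib' trace_add)
  also have "\<dots> = (2*g) * trace (C ** transpose C ** M) + (2*\<beta>) * trace ((C ** Wm) ** transpose (C ** Wm) ** M)"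
    unfolding CC by (simp add: matrix_add_rdistrib' trace_add scalar_matrix_assoc[symmetric] trace_def sum.distrib sum_distrib_left)
  finally have eq: "2 * trace (C ** M) = (2*g) * trace (C ** transpose C ** M) + (2*\<beta>) * trace ((C ** Wm) ** transpose (C ** Wm) ** M)" .
  have q1: "trace (C ** transpose C ** M) \<le> 0"
  proof -
    have "trace (C ** transpose C ** M) = trace (C ** (transpose C ** M))" by (simp add: matrix_mul_assoc)
    also have "\<dots> = trace (transpose C ** M ** C)" by (rule trace_mul_sym)
    finally show ?thesis using quad_trace[OF Mneg, of C] by simp
  qed
  have q2: "trace ((C ** Wm) ** transpose (C ** Wm) ** M) \<le> 0"
  proof -
    have "trace ((C ** Wm) ** transpose (C ** Wm) ** M) = trace ((C ** Wm) ** (transpose (C ** Wm) ** M))" by (simp add: matrix_mul_assoc)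
    also have "\<dots> = trace (transpose (C ** Wm) ** M ** (C ** Wm))" by (rule trace_mul_sym)
    finally show ?thesis using quad_trace[OF Mneg, of "C ** Wm"] by simp
  qed
  have "(2*g) * trace (C ** transpose C ** M) \<le> 0" using q1 g by (simp add: mult_nonneg_nonpos)
  moreover have "(2*\<beta>) * trace ((C ** Wm) ** transpose (C ** Wm) ** M) \<le> 0" using q2 b by (simp add: mult_nonneg_nonpos)
  ultimately show ?thesis using eq by linarith
qed

lemma trace_neg_lin:
  fixes A D M :: "real^'n \<Rightarrow> real^'n" and w :: "real^'n"
  assumes lA: "linear A" and lD: "linear D" and lM: "linear M"
    and AD: "\<And>h. A (D h) = M h"
    and Asym: "\<And>x y. x \<bullet> A y + y \<bullet> A x = 2 * (g * (x \<bullet> y) + \<beta> * (w \<bullet> x) * (w \<bullet> y))"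
    and g: "g > 0" and b: "\<beta> \<ge> 0"
    and Msym: "\<And>x y. x \<bullet> M y = y \<bullet> M x" and Mneg: "\<And>h. h \<bullet> M h \<le> 0"
  shows "(\<Sum>i\<in>UNIV. D (axis i 1) $ i) \<le> 0"
proof -
  define Am where "Am = matrix A"
  define Dm where "Dm = matrix D"
  define Mm where "Mm = matrix M"
  have Av: "Am *v x = A x" for x unfolding Am_def using lA by (simp add: matrix_works linear_matrix_vector_mul_eq)
  have Mv: "Mm *v x = M x" for x unfolding Mm_def using lM by (simp add: matrix_works linear_matrix_vector_mul_eq)
  have quad: "h \<bullet> A h = g * (h \<bullet> h) + \<beta> * (w \<bullet> h)\<^sup>2" for h
    using Asym[of h h] by (simp add: power2_eq_square)
  have "inj ((*v) Am)"
  proof (rule injI)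
    fix x y assume "Am *v x = Am *v y"
    then have "A (x - y) = 0" using Av lA by (simp add: linear_diff)
    then have "g * ((x - y) \<bullet> (x - y)) + \<beta> * (w \<bullet> (x - y))\<^sup>2 = 0" using quad[of "x - y"] by simp
    moreover have "\<beta> * (w \<bullet> (x - y))\<^sup>2 \<ge> 0" using b by simp
    moreover have "(x - y) \<bullet> (x - y) \<ge> 0" by simp
    ultimately have "(x - y) \<bullet> (x - y) = 0" using g
      by (smt (verit) mult_pos_pos)
    then show "x = y" by simp
  qed
  then obtain C where CA: "C ** Am = mat 1" using matrix_left_invertible_injective by blast
  then have AC: "Am ** C = mat 1" using matrix_left_right_inverse by blast
  have "A \<circ> D = M" using AD by (simp add: fun_eq_iff)
  then have ADm: "Am ** Dm = Mm" unfolding Am_def Dm_def Mm_def using matrix_compose[OF lD lA] by simp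
  have DC: "Dm = C ** Mm"
  proof -
    have "C ** (Am ** Dm) = Dm" by (simp add: matrix_mul_assoc CA)
    then show ?thesis using ADm by simp
  qed
  have ent: "(matrix L :: real^'n^'n)$i$j = axis i 1 \<bullet> L (axis j 1)" for L :: "real^'n \<Rightarrow> real^'n" and i j
    by (simp add: matrix_def inner_axis')
  have MT: "transpose Mm = Mm"
    unfolding Mm_def by (simp add: vec_eq_iff transpose_def ent Msym)
  have Mneg': "h \<bullet> (Mm *v h) \<le> 0" for h using Mneg Mv by simp
  have AT: "Am + transpose Am = (2*g) *\<^sub>R mat 1 + (2*\<beta>) *\<^sub>R (\<chi> i j. w$i * w$j)"
  proof -
    have "Am$i$j + Am$j$i = 2*g * (if i = j then 1 else 0) + 2*\<beta> * (w$i * w$j)" for i j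
    proof -
      have "Am$i$j + Am$j$i = axis i 1 \<bullet> A (axis j 1) + axis j 1 \<bullet> A (axis i 1)" unfolding Am_def ent by simp
      also have "\<dots> = 2 * (g * (axis i 1 \<bullet> axis j (1::real)) + \<beta> * (w \<bullet> axis i 1) * (w \<bullet> axis j 1))" by (rule Asym)
      also have "axis i 1 \<bullet> axis j (1::real) = (if i = j then 1 else 0)" by (simp add: inner_axis_axis)
      also have "w \<bullet> axis i 1 = w$i" by (simp add: inner_axis)
      also have "w \<bullet> axis j 1 = w$j" by (simp add: inner_axis)
      finally show ?thesis by (simp add: algebra_simps)
    qed
    then show ?thesis by (simp add: vec_eq_iff transpose_def mat_def)
  qed
  have "trace (C ** Mm) \<le> 0"
    by (rule trace_key[OF CA AC MT Mneg' AT]) (use g b in auto)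
  moreover have "trace Dm = (\<Sum>i\<in>UNIV. D (axis i 1) $ i)"
    unfolding Dm_def trace_def by (simp add: matrix_def)
  ultimately show ?thesis using DC by simp
qed

lemma linear_cross3: "linear (cross3 k)"
  by (rule linearI) (simp_all add: vec_eq_iff forall_3 cross_components algebra_simps)

lemma bounded_linear_cross3: "bounded_linear (cross3 k)"
  using linear_cross3 linear_conv_bounded_linear by blast

lemma cross_antisym: "x \<bullet> cross3 k y + y \<bullet> cross3 k x = 0"
  by (simp add: inner_vec_def sum_3 cross_components algebra_simps)

lemma grad_sum: "grad v y = (\<Sum>i\<in>UNIV. pd i v y *\<^sub>R axis i 1)"
proof -
  have "grad v y = (\<Sum>i\<in>UNIV. (grad v y $ i) *\<^sub>R axis i 1)" by (simp add: basis_exp_real)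
  then show ?thesis by (simp add: grad_def)
qed

lemma spatial:
  fixes v :: "real^3 \<Rightarrow> real" and k :: "real^3"
  assumes k_unit: "norm k = 1" and a_pos: "\<And>i. i \<le> N \<Longrightarrow> a i > 0" and alpha0: "\<alpha> 0 = 0"
    and mono: "\<And>i. i < N \<Longrightarrow> \<alpha> i < \<alpha> (Suc i)"
    and U: "open U" "x0 \<in> U" and mx: "\<And>y. y \<in> U \<Longrightarrow> v y \<le> v x0"
    and dv: "\<And>y. y \<in> U \<Longrightarrow> v differentiable at y"
    and dpv: "\<And>y i. y \<in> U \<Longrightarrow> pd i v differentiable at y"
    and cpv: "\<And>i j. continuous_on U (pd j (pd i v))"
    and W: "W = (\<lambda>y. Xfun N a \<alpha> k Rs (v y) (grad v y + (v y)\<^sup>2 *\<^sub>R Zfun k G \<Omega> e0 y t0))"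
    and dW: "W differentiable at x0"
  shows "divg W x0 \<le> 0"
proof -
  define V where "V y = grad v y + (v y)\<^sup>2 *\<^sub>R Zfun k G \<Omega> e0 y t0" for y
  define DW where "DW = frechet_derivative W (at x0)"
  have hW: "(W has_derivative DW) (at x0)" unfolding DW_def using dW frechet_derivative_works by blast
  define Di where "Di i = frechet_derivative (pd i v) (at x0)" for i
  have hDi: "(pd i v has_derivative Di i) (at x0)" for i
    unfolding Di_def using dpv[OF U(2), of i] frechet_derivative_works by blast
  have Dv0: "frechet_derivative v (at x0) = (\<lambda>_. 0)" using grad_zero(1)[OF U mx dv[OF U(2)]] .
  have hv: "(v has_derivative (\<lambda>_. 0)) (at x0)"
    using dv[OF U(2)] frechet_derivative_works Dv0 by metis
  define c where "c = (v x0)\<^sup>2 * \<Omega>\<^sup>2"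
  define MV where "MV h = (\<chi> i. Di i h) + c *\<^sub>R cross3 k (cross3 k h)" for h
  have hV1: "(V has_derivative MV) (at x0)"
  proof -
    have g1: "((\<lambda>y. grad v y) has_derivative (\<lambda>h. \<Sum>i\<in>UNIV. Di i h *\<^sub>R axis i 1)) (at x0)"
      unfolding grad_sum by (intro has_derivative_sum has_derivative_scaleR_left hDi)
    have g1': "(\<lambda>h. \<Sum>i\<in>UNIV. Di i h *\<^sub>R axis i 1) = (\<lambda>h. (\<chi> i. Di i h))"
    proof
      fix h
      show "(\<Sum>i\<in>UNIV. Di i h *\<^sub>R axis i 1) = (\<chi> i. Di i h)"
        using basis_exp_real[of "\<chi> i. Di i h"] by simp
    qed
    have lz: "Zfun k G \<Omega> e0 y t0 = - (G *\<^sub>R e0 t0) + \<Omega>\<^sup>2 *\<^sub>R cross3 k (cross3 k y)" for y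
      by (simp add: Zfun_def)
    have hZ: "((\<lambda>y. Zfun k G \<Omega> e0 y t0) has_derivative (\<lambda>h. \<Omega>\<^sup>2 *\<^sub>R cross3 k (cross3 k h))) (at x0)"
    proof -
      have "bounded_linear (\<lambda>h. cross3 k (cross3 k h))"
        using bounded_linear_compose[OF bounded_linear_cross3 bounded_linear_cross3] by (simp add: o_def)
      then have "((\<lambda>y. cross3 k (cross3 k y)) has_derivative (\<lambda>h. cross3 k (cross3 k h))) (at x0)"
        by (rule bounded_linear_imp_has_derivative)
      then show ?thesis unfolding lz
        by (auto intro!: derivative_eq_intros)
    qed
    have hsq: "((\<lambda>y. (v y)\<^sup>2) has_derivative (\<lambda>h. 0)) (at x0)"
      using has_derivative_mult[OF hv hv] by (simp add: power2_eq_square)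
    have "((\<lambda>y. (v y)\<^sup>2 *\<^sub>R Zfun k G \<Omega> e0 y t0) has_derivative
        (\<lambda>h. (v x0)\<^sup>2 *\<^sub>R (\<Omega>\<^sup>2 *\<^sub>R cross3 k (cross3 k h)) + 0 *\<^sub>R Zfun k G \<Omega> e0 x0 t0)) (at x0)"
      using has_derivative_scaleR[OF hsq hZ] by simp
    moreover have g2: "((\<lambda>y. grad v y) has_derivative (\<lambda>h. (\<chi> i. Di i h))) (at x0)"
      using g1 g1' by simp
    ultimately show ?thesis using has_derivative_add[OF g2]
      unfolding V_def[abs_def] MV_def[abs_def] c_def by (simp add: scaleR_scaleR)
  qed
  define w where "w = W x0"
  have ex: "\<exists>\<beta>\<ge>0. ((\<lambda>v. gfun N a \<alpha> (norm v) *\<^sub>R v) has_derivative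
            (\<lambda>h. gfun N a \<alpha> (norm w) *\<^sub>R h + (\<beta> * (w \<bullet> h)) *\<^sub>R w)) (at w)"
    by (rule G_deriv[OF a_pos alpha0 mono])
  then obtain \<beta> where b: "\<beta> \<ge> 0" and hG0: "((\<lambda>v. gfun N a \<alpha> (norm v) *\<^sub>R v) has_derivative
            (\<lambda>h. gfun N a \<alpha> (norm w) *\<^sub>R h + (\<beta> * (w \<bullet> h)) *\<^sub>R w)) (at w)"
    by blast
  define gw where "gw = gfun N a \<alpha> (norm w)"
  have hG: "((\<lambda>v. gfun N a \<alpha> (norm v) *\<^sub>R v) has_derivative
            (\<lambda>h. gw *\<^sub>R h + (\<beta> * (w \<bullet> h)) *\<^sub>R w)) (at w)"
    using hG0 unfolding gw_def .
  define z0 where "z0 = Rs * v x0"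
  define A where "A h = gw *\<^sub>R h + (\<beta> * (w \<bullet> h)) *\<^sub>R w + z0 *\<^sub>R cross3 k h" for h
  have VF: "V y = Ffun N a \<alpha> k (Rs * v y) (W y)" for y
    unfolding V_def W Xfun_def using F_surj[OF k_unit a_pos alpha0 mono] by simp
  have hV2: "(V has_derivative (\<lambda>h. A (DW h))) (at x0)"
  proof -
    have e: "V = (\<lambda>y. gfun N a \<alpha> (norm (W y)) *\<^sub>R W y + (Rs * v y) *\<^sub>R cross3 k (W y))"
      using VF by (simp add: Ffun_def fun_eq_iff)
    have h1: "((\<lambda>y. gfun N a \<alpha> (norm (W y)) *\<^sub>R W y) has_derivative (\<lambda>h. gw *\<^sub>R DW h + (\<beta> * (w \<bullet> DW h)) *\<^sub>R w)) (at x0)"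
      using has_derivative_compose[OF hW hG[unfolded w_def]] unfolding w_def by simp
    have hc: "((\<lambda>y. cross3 k (W y)) has_derivative (\<lambda>h. cross3 k (DW h))) (at x0)"
      using bounded_linear.has_derivative[OF bounded_linear_cross3 hW] .
    have hr: "((\<lambda>y. Rs * v y) has_derivative (\<lambda>h. 0)) (at x0)"
      using has_derivative_mult_right[OF hv, of Rs] by simp
    have "((\<lambda>y. (Rs * v y) *\<^sub>R cross3 k (W y)) has_derivative (\<lambda>h. z0 *\<^sub>R cross3 k (DW h) + 0 *\<^sub>R cross3 k (W x0))) (at x0)"
      using has_derivative_scaleR[OF hr hc] unfolding z0_def by simp
    from has_derivative_add[OF h1 this] show ?thesis unfolding e A_def by (simp add: add.assoc)
  qed
  have AD: "A (DW h) = MV h" for h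
    using has_derivative_unique[OF hV2 hV1] by metis
  have lDW: "linear DW" using hW has_derivative_linear by blast
  have lMV: "linear MV" using hV1 has_derivative_linear by blast
  have lA: "linear A"
  proof (rule linearI)
    fix x y :: "real^3" and r :: real
    show "A (x + y) = A x + A y"
      unfolding A_def by (simp add: inner_add_right linear_add[OF linear_cross3] algebra_simps)
    show "A (r *\<^sub>R x) = r *\<^sub>R A x"
      unfolding A_def by (simp add: linear_scale[OF linear_cross3] algebra_simps)
  qed
  have gw: "gw > 0" using g_ge[of N a \<alpha>, OF a_pos alpha0, of "norm w"] a_pos[of 0] unfolding gw_def by simp
  have Asym: "x \<bullet> A y + y \<bullet> A x = 2 * (gw * (x \<bullet> y) + \<beta> * (w \<bullet> x) * (w \<bullet> y))" for x y
  proof -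
    have "x \<bullet> A y + y \<bullet> A x = 2 * (gw * (x \<bullet> y) + \<beta> * (w \<bullet> x) * (w \<bullet> y)) + z0 * (x \<bullet> cross3 k y + y \<bullet> cross3 k x)"
      unfolding A_def by (simp add: inner_add_right algebra_simps inner_commute)
    then show ?thesis using cross_antisym by simp
  qed
  have sch: "pd j (pd i v) x0 = pd i (pd j v) x0" for i j
    by (rule schwarz[OF U dv dpv dpv cpv cpv])
  have Di_exp: "Di i y = (\<Sum>j\<in>UNIV. y$j * pd j (pd i v) x0)" for i y
    unfolding Di_def pd_def[of _ "pd i v"] using linear_expand hDi[of i] has_derivative_linear Di_def by metis
  have kk: "x \<bullet> cross3 k (cross3 k y) = (k \<bullet> y) * (x \<bullet> k) - (k \<bullet> k) * (x \<bullet> y)" for x y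
    by (simp add: cross_cross inner_diff_right)
  have Msym: "x \<bullet> MV y = y \<bullet> MV x" for x y
  proof -
    have "x \<bullet> (\<chi> i. Di i y) = (\<Sum>i\<in>UNIV. \<Sum>j\<in>UNIV. x$i * y$j * pd j (pd i v) x0)"
      by (simp add: inner_vec_def Di_exp sum_distrib_left mult.assoc)
    also have "\<dots> = (\<Sum>j\<in>UNIV. \<Sum>i\<in>UNIV. x$i * y$j * pd j (pd i v) x0)" by (rule sum.swap)
    also have "\<dots> = y \<bullet> (\<chi> i. Di i x)"
      by (simp add: inner_vec_def Di_exp sum_distrib_left sch mult_ac)
    finally have "x \<bullet> (\<chi> i. Di i y) = y \<bullet> (\<chi> i. Di i x)" .
    then show ?thesis unfolding MV_def by (simp add: inner_add_right kk inner_commute)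
  qed
  have Mneg: "h \<bullet> MV h \<le> 0" for h
  proof -
    have "h \<bullet> (\<chi> i. Di i h) = (\<Sum>i\<in>UNIV. h$i * frechet_derivative (pd i v) (at x0) h)"
      by (simp add: inner_vec_def Di_def)
    also have "\<dots> \<le> 0" by (rule second_order[OF U mx dv dpv[OF U(2)]])
    finally have s1: "h \<bullet> (\<chi> i. Di i h) \<le> 0" .
    have "(k \<bullet> h)\<^sup>2 \<le> (k \<bullet> k) * (h \<bullet> h)"
      using Cauchy_Schwarz_ineq[of k h] by simp
    then have "h \<bullet> cross3 k (cross3 k h) \<le> 0" using kk[of h h] by (simp add: inner_commute power2_eq_square)
    moreover have "c \<ge> 0" unfolding c_def by simp
    ultimately have "c * (h \<bullet> cross3 k (cross3 k h)) \<le> 0" by (simp add: mult_nonneg_nonpos)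
    then show ?thesis using s1 unfolding MV_def by (simp add: inner_add_right)
  qed
  have "(\<Sum>i\<in>UNIV. DW (axis i 1) $ i) \<le> 0"
    by (rule trace_neg_lin[OF lA lDW lMV AD Asym gw b Msym Mneg])
  then show ?thesis unfolding divg_def DW_def .
qed

lemma time_deriv_ge:
  fixes f :: "real \<Rightarrow> real"
  assumes t0: "0 < t0" "t0 \<le> T" and df: "f differentiable (at t0 within {0<..T})"
    and le: "\<And>s. 0 < s \<Longrightarrow> s < t0 \<Longrightarrow> f s - \<epsilon> * s \<le> f t0 - \<epsilon> * t0"
  shows "vector_derivative f (at t0 within {0<..T}) \<ge> \<epsilon>"
proof -
  define d where "d = vector_derivative f (at t0 within {0<..T})"
  have "(f has_vector_derivative d) (at t0 within {0<..T})"
    unfolding d_def using df vector_derivative_works by blast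
  then have "(f has_real_derivative d) (at t0 within {0<..T})"
    using has_real_derivative_iff_has_vector_derivative by blast
  then have "(f has_real_derivative d) (at t0 within {0<..<t0})"
    by (rule DERIV_subset) (use t0 in auto)
  moreover have F: "at t0 within {0<..<t0} = at_left t0"
    by (rule at_within_nhd[where S="{0<..}"]) (use t0 in auto)
  ultimately have "(f has_real_derivative d) (at_left t0)" by simp
  then have lim: "((\<lambda>s. (f s - f t0) / (s - t0)) \<longlongrightarrow> d) (at_left t0)"
    using has_field_derivative_iff by blast
  have ev: "eventually (\<lambda>s. \<epsilon> \<le> (f s - f t0) / (s - t0)) (at_left t0)"
  proof -
    have "eventually (\<lambda>s. 0 < s \<and> s < t0) (at_left t0)"
      using eventually_at_left_real[of 0 t0] t0 by (auto elim: eventually_mono)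
    then show ?thesis
    proof (rule eventually_mono)
      fix s assume s: "0 < s \<and> s < t0"
      then have "f s - f t0 \<le> \<epsilon> * (s - t0)" using le[of s] by (simp add: algebra_simps)
      moreover have "s - t0 < 0" using s by simp
      ultimately show "\<epsilon> \<le> (f s - f t0) / (s - t0)" by (simp add: le_divide_eq)
    qed
  qed
  have "\<epsilon> \<le> d" by (rule tendsto_lowerbound[OF lim ev]) simp
  then show ?thesis unfolding d_def .
qed

lemma no_interior_max:
  fixes N :: nat and \<alpha> a :: "nat \<Rightarrow> real" and k :: "real^3" and Rs G \<Omega> T :: real
    and e0 :: "real \<Rightarrow> real^3" and U :: "(real^3) set" and u :: "real^3 \<Rightarrow> real \<Rightarrow> real"
  assumes alpha0: "\<alpha> 0 = 0"
    and alpha_mono: "\<And>i. i < N \<Longrightarrow> \<alpha> i < \<alpha> (Suc i)"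
    and a_pos: "\<And>i. i \<le> N \<Longrightarrow> a i > 0"
    and k_unit: "norm k = 1"
    and U_open: "open U"
    and u_C21: "C21 U T u"
    and pde: "\<And>x t. x \<in> U \<Longrightarrow> 0 < t \<Longrightarrow> t \<le> T \<Longrightarrow>
       (let W = (\<lambda>y. Xfun N a \<alpha> k Rs (u y t)
                       (grad (\<lambda>z. u z t) y + (u y t)\<^sup>2 *\<^sub>R Zfun k G \<Omega> e0 y t))
        in W differentiable (at x) \<and>
           vector_derivative (\<lambda>s. u x s) (at t within {0<..T}) = divg W x)"
    and eps: "\<epsilon> > 0" and x0: "x0 \<in> U" and t0: "0 < t0" "t0 \<le> T"
    and mx: "\<And>x t. x \<in> closure U \<Longrightarrow> 0 \<le> t \<Longrightarrow> t \<le> T \<Longrightarrow> u x t - \<epsilon> * t \<le> u x0 t0 - \<epsilon> * t0"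
  shows False
proof -
  define UT where "UT = {(x,t). x \<in> U \<and> 0 < t \<and> t \<le> T}"
  have C: "\<forall>(x,t)\<in>UT. (\<lambda>y. u y t) differentiable (at x) \<and>
         (\<forall>i. (\<lambda>y. pd i (\<lambda>z. u z t) y) differentiable (at x)) \<and>
         (\<lambda>s. u x s) differentiable (at t within {0<..T})"
    and Cc: "\<forall>i j. continuous_on UT (\<lambda>(x,t). pd j (pd i (\<lambda>z. u z t)) x)"
    using u_C21 unfolding C21_def Let_def UT_def by auto
  define v where "v = (\<lambda>z. u z t0)"
  have inUT: "y \<in> U \<Longrightarrow> (y, t0) \<in> UT" for y using t0 by (simp add: UT_def)
  have dv: "\<And>y. y \<in> U \<Longrightarrow> v differentiable at y" using C inUT unfolding v_def by fastforce
  have dpv: "\<And>y i. y \<in> U \<Longrightarrow> pd i v differentiable at y"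
  proof -
    fix y i assume "y \<in> U"
    then have "(\<lambda>y. pd i (\<lambda>z. u z t0) y) differentiable (at y)" using C inUT by fastforce
    then show "pd i v differentiable at y" unfolding v_def by (simp add: eta_contract_eq)
  qed
  have cpv: "\<And>i j. continuous_on U (pd j (pd i v))"
  proof -
    fix i j
    have c1: "continuous_on U (\<lambda>y. (y, t0))" by (intro continuous_intros)
    have c2: "(\<lambda>y. (y,t0)) ` U \<subseteq> UT" using inUT by auto
    from continuous_on_compose2[OF Cc[rule_format, of j i] c1 c2]
    show "continuous_on U (pd j (pd i v))" unfolding v_def by simp
  qed
  have clU: "U \<subseteq> closure U" by (rule closure_subset)
  have mxv: "\<And>y. y \<in> U \<Longrightarrow> v y \<le> v x0"
  proof -
    fix y assume "y \<in> U"
    then have "y \<in> closure U" using clU by blast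
    then have "u y t0 - \<epsilon> * t0 \<le> u x0 t0 - \<epsilon> * t0" using mx t0 by simp
    then show "v y \<le> v x0" unfolding v_def by simp
  qed
  define W where "W = (\<lambda>y. Xfun N a \<alpha> k Rs (u y t0)
                       (grad (\<lambda>z. u z t0) y + (u y t0)\<^sup>2 *\<^sub>R Zfun k G \<Omega> e0 y t0))"
  have P: "W differentiable (at x0) \<and> vector_derivative (\<lambda>s. u x0 s) (at t0 within {0<..T}) = divg W x0"
    using pde[OF x0 t0] unfolding W_def Let_def by simp
  have W': "W = (\<lambda>y. Xfun N a \<alpha> k Rs (v y) (grad v y + (v y)\<^sup>2 *\<^sub>R Zfun k G \<Omega> e0 y t0))"
    unfolding W_def v_def ..
  have "divg W x0 \<le> 0"
    by (rule spatial[OF k_unit a_pos alpha0 alpha_mono U_open x0 mxv dv dpv cpv W' conjunct1[OF P]])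
  moreover have "vector_derivative (\<lambda>s. u x0 s) (at t0 within {0<..T}) \<ge> \<epsilon>"
  proof (rule time_deriv_ge[OF t0])
    show "(\<lambda>s. u x0 s) differentiable (at t0 within {0<..T})" using C inUT[OF x0] by fastforce
    fix s assume "0 < s" "s < t0"
    then show "u x0 s - \<epsilon> * s \<le> u x0 t0 - \<epsilon> * t0" using mx[of x0 s] clU x0 t0 by auto
  qed
  ultimately show False using P eps by simp
qed

theorem theorem5p1:
  fixes N :: nat and \<alpha> a :: "nat \<Rightarrow> real" and k :: "real^3" and Rs G \<Omega> T :: real
    and e0 :: "real \<Rightarrow> real^3" and U :: "(real^3) set" and u :: "real^3 \<Rightarrow> real \<Rightarrow> real"
  assumes N: "N \<ge> 1"
    and alpha0: "\<alpha> 0 = 0"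
    and alpha_mono: "\<And>i. i < N \<Longrightarrow> \<alpha> i < \<alpha> (Suc i)"
    and a_pos: "\<And>i. i \<le> N \<Longrightarrow> a i > 0"
    and k_unit: "norm k = 1"
    and Rs: "Rs \<ge> 0"
    and G: "G > 0"
    and Om: "\<Omega> \<ge> 0"
    and e0_smooth: "smooth_fun e0"
    and e0_unit: "\<And>t. norm (e0 t) = 1"
    and U_open: "open U" and U_bdd: "bounded U" and U_C1: "C1_boundary U"
    and T: "T > 0"
    and u_cont: "continuous_on {(x,t). x \<in> closure U \<and> 0 \<le> t \<and> t \<le> T} (\<lambda>(x,t). u x t)"
    and u_C21: "C21 U T u"
    and u_nonneg: "\<And>x t. x \<in> closure U \<Longrightarrow> 0 \<le> t \<Longrightarrow> t \<le> T \<Longrightarrow> u x t \<ge> 0"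
    and pde: "\<And>x t. x \<in> U \<Longrightarrow> 0 < t \<Longrightarrow> t \<le> T \<Longrightarrow>
       (let W = (\<lambda>y. Xfun N a \<alpha> k Rs (u y t)
                       (grad (\<lambda>z. u z t) y + (u y t)\<^sup>2 *\<^sub>R Zfun k G \<Omega> e0 y t))
        in W differentiable (at x) \<and>
           vector_derivative (\<lambda>s. u x s) (at t within {0<..T}) = divg W x)"
  shows "(SUP (x,t)\<in>{(x,t). x \<in> closure U \<and> 0 \<le> t \<and> t \<le> T}. u x t)
       = (SUP (x,t)\<in>{(x,t). x \<in> closure U \<and> 0 \<le> t \<and> t \<le> T}
                    - {(x,t). x \<in> U \<and> 0 < t \<and> t \<le> T}. u x t)"
proof -
  define K where "K = {(x,t). x \<in> closure U \<and> 0 \<le> t \<and> t \<le> T}"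
  define UT where "UT = {(x,t). x \<in> U \<and> 0 < t \<and> t \<le> T}"
  define f where "f = (\<lambda>(x,t). u x t)"
  define Pb where "Pb = K - UT"
  have Keq: "K = closure U \<times> {0..T}" unfolding K_def by auto
  show ?thesis
  proof (cases "U = {}")
    case True
    then have "K = {}" unfolding K_def by simp
    then show ?thesis unfolding K_def using True by simp
  next
    case False
    have cK: "compact K" unfolding Keq using U_bdd by (intro compact_Times) auto
    have fc: "continuous_on K f" using u_cont unfolding K_def f_def .
    have bK: "bdd_above (f ` K)"
      using compact_continuous_image[OF fc cK] by (simp add: bounded_imp_bdd_above compact_imp_bounded)
    have PK: "Pb \<subseteq> K" unfolding Pb_def by auto
    have bP: "bdd_above (f ` Pb)" using bK PK by (meson bdd_above_mono image_mono)
    obtain x1 where x1: "x1 \<in> U" using False by blast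
    have "(x1, 0) \<in> Pb" unfolding Pb_def K_def UT_def using x1 closure_subset T by auto
    then have Pne: "Pb \<noteq> {}" by blast
    have Kne: "K \<noteq> {}" using PK Pne by blast
    define M where "M = Sup (f ` Pb)"
    have upper: "f p \<le> M" if p: "p \<in> K" for p
    proof (rule field_le_epsilon)
      fix e :: real assume e: "e > 0"
      define \<epsilon> where "\<epsilon> = e / T"
      have eps: "\<epsilon> > 0" using e T by (simp add: \<epsilon>_def)
      define wf where "wf = (\<lambda>q. f q - \<epsilon> * snd q)"
      have wc: "continuous_on K wf" unfolding wf_def by (intro continuous_intros fc)
      obtain p0 where p0: "p0 \<in> K" and p0max: "\<And>q. q \<in> K \<Longrightarrow> wf q \<le> wf p0"
        using continuous_attains_sup[OF cK Kne wc] by blast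
      obtain x0 t0 where p0e: "p0 = (x0, t0)" by (cases p0)
      have "p0 \<notin> UT"
      proof
        assume "p0 \<in> UT"
        then have x0: "x0 \<in> U" and t0: "0 < t0" "t0 \<le> T" unfolding UT_def p0e by auto
        show False
        proof (rule no_interior_max[OF alpha0 alpha_mono a_pos k_unit U_open u_C21 pde eps x0 t0])
          fix x t assume "x \<in> closure U" "0 \<le> t" "t \<le> T"
          then have "(x,t) \<in> K" unfolding K_def by simp
          then show "u x t - \<epsilon> * t \<le> u x0 t0 - \<epsilon> * t0"
            using p0max[of "(x,t)"] unfolding wf_def f_def p0e by simp
        qed
      qed
      then have "p0 \<in> Pb" using p0 unfolding Pb_def by simp
      then have fp0: "f p0 \<le> M" unfolding M_def using bP by (simp add: cSUP_upper)
      obtain x t where pe: "p = (x,t)" by (cases p)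
      have t: "0 \<le> t" "t \<le> T" using p unfolding pe K_def by auto
      have t0: "0 \<le> snd p0" using p0 unfolding K_def p0e by auto
      have "f p - \<epsilon> * t \<le> f p0 - \<epsilon> * snd p0" using p0max[OF p] unfolding wf_def pe by simp
      moreover have "\<epsilon> * t \<le> e" using t eps T unfolding \<epsilon>_def by (simp add: field_simps)
      moreover have "\<epsilon> * snd p0 \<ge> 0" using eps t0 by simp
      ultimately show "f p \<le> M + e" using fp0 by linarith
    qed
    have "Sup (f ` K) \<le> M" using Kne upper by (intro cSUP_least) auto
    moreover have "M \<le> Sup (f ` K)" unfolding M_def using Pne bK PK by (intro cSUP_subset_mono) auto
    ultimately have "Sup (f ` K) = Sup (f ` Pb)" unfolding M_def by simp
    then show ?thesis unfolding f_def K_def Pb_def UT_def by simp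
  qed
qed

end
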